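(* Let $z_0, z_1, z_2, \ldots$ be independent standard normal random variables, and fix $L \in \mathbb{N}$. For each integer $N \ge L$, let $H_L = H_L(z)$ be the $L \times (N-L+1)$ Hankel matrix \[ H_L(z) = \begin{bmatrix} z_0 & z_1 & \cdots & z_{N-L} \\ z_1 & z_2 & \cdots & z_{N-L+1} \\ \vdots & \vdots & \ddots & \vdots \\ z_{L-1} & z_L & \cdots & z_{N-1} \end{bmatrix}, \] and let $\sigma_{\min}(H_L)$ denote its smallest singular value, i.e. the square root of the smallest eigenvalue of $H_L H_L^\top$. Then there exists a sequence of positive numbers $(\varepsilon_N)$ with $\varepsilon_N \to 0^+$ as $N \to \infty$ such that \[ \lim_{N\to\infty} \Pr\left( \frac{1}{\sigma_{\min}(H_L)} \le \varepsilon_N \right) = 1. \]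
   Context: $H_L(z)$ is the Hankel matrix of depth $L$ built from the first $N$ samples $z_0,\ldots,z_{N-1}$; it has $L$ rows and $N-L+1$ columns, with entry $(i,j)$ equal to $z_{i+j}$ for $0\le i\le L-1$, $0\le j\le N-L$. The convention $1/0=+\infty$ is used if $\sigma_{\min}(H_L)=0$. *)

theory Defs
  imports "HOL-Probability.Probability" "Jordan_Normal_Form.Char_Poly"
begin

definition hankel_mat :: "nat \<Rightarrow> nat \<Rightarrow> (nat \<Rightarrow> real) \<Rightarrow> real mat" where
  "hankel_mat L N z = mat L (N - L + 1) (\<lambda>(i, j). z (i + j))"

definition sigma_min :: "real mat \<Rightarrow> real" where
  "sigma_min H = sqrt (Min {e. eigenvalue (H * transpose_mat H) e})"

end

theory Submission
  imports Defs "HOL-Real_Asymp.Real_Asymp"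
begin


lemma prod_list_count: "prod_list (map f xs) = (\<Prod>x\<in>set xs. f x ^ count_list xs x)"
  for f :: "'a \<Rightarrow> 'b::comm_monoid_mult"
proof (induction xs)
  case Nil then show ?case by simp
next
  case (Cons a xs)
  show ?case
  proof (cases "a \<in> set xs")
    case True
    have "(\<Prod>x\<in>set (a#xs). f x ^ count_list (a#xs) x)
       = f a ^ count_list (a#xs) a * (\<Prod>x\<in>set xs - {a}. f x ^ count_list (a#xs) x)"
      using True by (simp add: prod.remove insert_absorb)
    also have "(\<Prod>x\<in>set xs - {a}. f x ^ count_list (a#xs) x) = (\<Prod>x\<in>set xs - {a}. f x ^ count_list xs x)"
      by (rule prod.cong) auto
    also have "f a ^ count_list (a#xs) a = f a * f a ^ count_list xs a" by simp
    also have "f a * f a ^ count_list xs a * (\<Prod>x\<in>set xs - {a}. f x ^ count_list xs x)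
       = f a * (\<Prod>x\<in>set xs. f x ^ count_list xs x)"
      using True by (simp add: prod.remove mult.assoc)
    finally show ?thesis using Cons by simp
  next
    case False
    then have "count_list xs a = 0" by (simp add: count_list_0_iff)
    moreover have "(\<Prod>x\<in>set xs. f x ^ count_list (a#xs) x) = (\<Prod>x\<in>set xs. f x ^ count_list xs x)"
      by (rule prod.cong) (use False in auto)
    ultimately show ?thesis using Cons False by simp
  qed
qed

definition mom :: "nat \<Rightarrow> real" where
  "mom k = integral\<^sup>L lborel (\<lambda>x. std_normal_density x * x ^ k)"

lemma mom_int: "integrable lborel (\<lambda>x. std_normal_density x * x ^ k)"
proof -
  obtain j where "k = 2*j \<or> k = 2*j+1" by (metis oddE evenE)
  then show ?thesis
  proof
    assume "k = 2*j" then show ?thesis using integrable.intros[OF std_normal_moment_even[of j]] by simp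
  next
    assume "k = 2*j+1" then show ?thesis using integrable.intros[OF std_normal_moment_odd[of j]] by simp
  qed
qed

lemma mom_vals: "mom 0 = 1" "mom 1 = 0" "mom 2 = 1" "mom 3 = 0" "mom 4 = 3"
proof -
  show "mom 0 = 1" using integral_std_normal_moment_even[of 0] by (simp add: mom_def)
  show "mom 1 = 0" using integral_std_normal_moment_odd[of 0] by (simp add: mom_def)
  show "mom 2 = 1" using integral_std_normal_moment_even[of 1] by (simp add: mom_def)
  show "mom 3 = 0" using integral_std_normal_moment_odd[of 1] by (simp add: mom_def numeral_3_eq_3)
  have "fact (2*2) / (2^2 * fact 2) = (3::real)" by (simp add: fact_numeral)
  then show "mom 4 = 3" using integral_std_normal_moment_even[of 2] by (simp add: mom_def)
qed

lemma mom_suc: "mom 0 = 1" "mom (Suc 0) = 0" "mom (Suc (Suc 0)) = 1" "mom (Suc (Suc (Suc 0))) = 0" "mom (Suc (Suc (Suc (Suc 0)))) = 3"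
  using mom_vals by (simp_all add: numeral_eq_Suc)

definition aa :: "nat \<Rightarrow> (nat \<Rightarrow> real) \<Rightarrow> nat \<Rightarrow> nat \<Rightarrow> real" where
  "aa S x i k = (\<Sum>j<S. x (i+j) * x (k+j))"

locale gauss = prob_space M for M :: "'a measure" +
  fixes z :: "nat \<Rightarrow> 'a \<Rightarrow> real"
  assumes ind: "indep_vars (\<lambda>_. borel) z UNIV"
    and dist: "\<And>i. distributed M lborel (z i) std_normal_density"
begin

lemma z_meas[measurable]: "z i \<in> borel_measurable M"
  using distributed_measurable[OF dist[of i]] by simp

lemma z_pow_int: "integrable M (\<lambda>\<omega>. z i \<omega> ^ k)"
  using distributed_integrable[OF dist[of i], of "\<lambda>x. x ^ k"] mom_int[of k] by simp

lemma z_pow_exp: "expectation (\<lambda>\<omega>. z i \<omega> ^ k) = mom k"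
  using distributed_integral[OF dist[of i], of "\<lambda>x. x ^ k"] by (simp add: mom_def)

lemma prod_exp:
  assumes "finite I"
  shows "expectation (\<lambda>\<omega>. \<Prod>x\<in>I. z x \<omega> ^ m x) = (\<Prod>x\<in>I. mom (m x))"
    and "integrable M (\<lambda>\<omega>. \<Prod>x\<in>I. z x \<omega> ^ m x)"
proof -
  have ind': "indep_vars (\<lambda>_. borel) (\<lambda>x \<omega>. (\<lambda>t. t ^ m x) (z x \<omega>)) I"
    by (rule indep_vars_compose2[OF indep_vars_subset[OF ind]]) auto
  show "expectation (\<lambda>\<omega>. \<Prod>x\<in>I. z x \<omega> ^ m x) = (\<Prod>x\<in>I. mom (m x))"
    using indep_vars_lebesgue_integral[OF assms ind'] z_pow_int z_pow_exp by simp
  show "integrable M (\<lambda>\<omega>. \<Prod>x\<in>I. z x \<omega> ^ m x)"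
    using indep_vars_integrable[OF assms ind'] z_pow_int by simp
qed

lemma list_exp:
  shows "expectation (\<lambda>\<omega>. prod_list (map (\<lambda>x. z x \<omega>) l)) = (\<Prod>x\<in>set l. mom (count_list l x))"
    and "integrable M (\<lambda>\<omega>. prod_list (map (\<lambda>x. z x \<omega>) l))"
  using prod_exp[of "set l" "count_list l"] by (simp_all add: prod_list_count)

definition d :: "nat \<Rightarrow> nat \<Rightarrow> real" where "d a b = (if a = b then 1 else 0)"

lemma isserlis4:
  "expectation (\<lambda>\<omega>. z p \<omega> * z q \<omega> * z r \<omega> * z s \<omega>) = d p q * d r s + d p r * d q s + d p s * d q r"
proof -
  have "expectation (\<lambda>\<omega>. z p \<omega> * z q \<omega> * z r \<omega> * z s \<omega>) = (\<Prod>x\<in>set [p,q,r,s]. mom (count_list [p,q,r,s] x))"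
    using list_exp(1)[of "[p,q,r,s]"] by (simp add: mult.assoc)
  also have "\<dots> = d p q * d r s + d p r * d q s + d p s * d q r"
    by (cases "p=q"; cases "p=r"; cases "p=s"; cases "q=r"; cases "q=s"; cases "r=s"; simp add: d_def mom_suc insert_commute)
  finally show ?thesis .
qed

lemma int4: "integrable M (\<lambda>\<omega>. z p \<omega> * z q \<omega> * z r \<omega> * z s \<omega>)"
  using list_exp(2)[of "[p,q,r,s]"] by (simp add: mult.assoc)

lemma exp2: "expectation (\<lambda>\<omega>. z p \<omega> * z q \<omega>) = d p q"
proof -
  have "expectation (\<lambda>\<omega>. z p \<omega> * z q \<omega>) = (\<Prod>x\<in>set [p,q]. mom (count_list [p,q] x))"
    using list_exp(1)[of "[p,q]"] by simp
  also have "\<dots> = d p q" by (cases "p=q"; simp add: d_def mom_suc insert_commute)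
  finally show ?thesis .
qed

lemma int2: "integrable M (\<lambda>\<omega>. z p \<omega> * z q \<omega>)"
  using list_exp(2)[of "[p,q]"] by simp

end


context gauss begin

lemma sq_sum_expand: "(\<Sum>j<S. z (f j) \<omega> * z (g j) \<omega>)^2 = (\<Sum>j<S. \<Sum>j'<S. z (f j) \<omega> * z (g j) \<omega> * z (f j') \<omega> * z (g j') \<omega>)"
  by (simp add: power2_eq_square sum_product mult.assoc)

lemma sq_sum_int: "integrable M (\<lambda>\<omega>. (\<Sum>j<S. z (f j) \<omega> * z (g j) \<omega>)^2)"
  unfolding sq_sum_expand by (intro Bochner_Integration.integrable_sum int4)

lemma sq_sum_exp: "expectation (\<lambda>\<omega>. (\<Sum>j<S. z (f j) \<omega> * z (g j) \<omega>)^2) =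
   (\<Sum>j<S. \<Sum>j'<S. d (f j) (g j) * d (f j') (g j') + d (f j) (f j') * d (g j) (g j') + d (f j) (g j') * d (g j) (f j'))"
  unfolding sq_sum_expand
  by (simp add: Bochner_Integration.integral_sum int4 Bochner_Integration.integrable_sum isserlis4)

lemma sum_int: "integrable M (\<lambda>\<omega>. \<Sum>j<S. z (f j) \<omega> * z (g j) \<omega>)"
  by (intro Bochner_Integration.integrable_sum int2)

lemma sum_exp: "expectation (\<lambda>\<omega>. \<Sum>j<S. z (f j) \<omega> * z (g j) \<omega>) = (\<Sum>j<S. d (f j) (g j))"
  by (simp add: Bochner_Integration.integral_sum int2 exp2)


lemma aa_meas[measurable]: "(\<lambda>\<omega>. aa S (\<lambda>k. z k \<omega>) i k) \<in> borel_measurable M"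
  unfolding aa_def by measurable

lemma diag_bound:
  assumes "S > 0"
  shows "prob {\<omega> \<in> space M. aa S (\<lambda>k. z k \<omega>) i i < S/2} \<le> 8 / S"
proof -
  let ?X = "\<lambda>\<omega>. aa S (\<lambda>k. z k \<omega>) i i"
  have e1: "expectation ?X = S"
    unfolding aa_def using sum_exp[where S=S and f="\<lambda>j. i+j" and g="\<lambda>j. i+j"] by (simp add: d_def)
  have e2: "expectation (\<lambda>\<omega>. (?X \<omega>)^2) = S^2 + 2*S"
  proof -
    have "expectation (\<lambda>\<omega>. (?X \<omega>)^2) = (\<Sum>j<S. \<Sum>j'<S. 1 + 2 * d j j')"
      unfolding aa_def sq_sum_exp by (intro sum.cong refl) (simp add: d_def)
    also have "\<dots> = S^2 + 2*S"
      by (simp add: sum.distrib d_def power2_eq_square sum_distrib_left[symmetric] algebra_simps)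
    finally show ?thesis .
  qed
  have i1: "integrable M ?X" unfolding aa_def by (rule sum_int)
  have i2: "integrable M (\<lambda>\<omega>. (?X \<omega>)^2)" unfolding aa_def by (rule sq_sum_int)
  have var: "variance ?X = 2 * S"
  proof -
    have "variance ?X = expectation (\<lambda>\<omega>. (?X \<omega>)^2 - 2 * S * ?X \<omega> + S^2)"
      by (simp add: e1 power2_diff algebra_simps)
    also have "\<dots> = expectation (\<lambda>\<omega>. (?X \<omega>)^2) - 2 * S * expectation ?X + S^2"
      using i1 i2 prob_space by simp
    also have "\<dots> = 2 * S" unfolding e1 e2 by (simp add: power2_eq_square)
    finally show ?thesis .
  qed
  have "{\<omega> \<in> space M. ?X \<omega> < S/2} \<subseteq> {\<omega> \<in> space M. S/2 \<le> \<bar>?X \<omega> - expectation ?X\<bar>}"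
    by (auto simp: e1)
  then have "prob {\<omega> \<in> space M. ?X \<omega> < S/2} \<le> prob {\<omega> \<in> space M. S/2 \<le> \<bar>?X \<omega> - expectation ?X\<bar>}"
    by (intro finite_measure_mono) measurable
  also have "\<dots> \<le> variance ?X / (S/2)^2"
    by (rule Chebyshev_inequality) (use i2 assms in auto)
  also have "\<dots> = (2 * S) / (S/2)^2" by (simp only: var)
  also have "\<dots> = 8 / S" using assms by (simp add: power2_eq_square field_simps)
  finally show ?thesis .
qed

lemma off_bound:
  assumes "S > 0" "i \<noteq> k" "t > 0"
  shows "prob {\<omega> \<in> space M. t \<le> \<bar>aa S (\<lambda>k. z k \<omega>) i k\<bar>} \<le> S / t^2"
proof -
  let ?X = "\<lambda>\<omega>. aa S (\<lambda>k. z k \<omega>) i k"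
  have e1: "expectation ?X = 0"
    unfolding aa_def using sum_exp[where S=S and f="\<lambda>j. i+j" and g="\<lambda>j. k+j"] assms by (simp add: d_def)
  have e2: "expectation (\<lambda>\<omega>. (?X \<omega>)^2) = S"
  proof -
    have "expectation (\<lambda>\<omega>. (?X \<omega>)^2) = (\<Sum>j<S. \<Sum>j'<S. d j j')"
      unfolding aa_def sq_sum_exp using assms(2) by (intro sum.cong refl) (auto simp: d_def)
    also have "\<dots> = S" by (simp add: d_def)
    finally show ?thesis .
  qed
  have i2: "integrable M (\<lambda>\<omega>. (?X \<omega>)^2)" unfolding aa_def by (rule sq_sum_int)
  have "prob {\<omega> \<in> space M. t \<le> \<bar>?X \<omega>\<bar>} = prob {\<omega> \<in> space M. t \<le> \<bar>?X \<omega> - expectation ?X\<bar>}"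
    by (simp add: e1)
  also have "\<dots> \<le> variance ?X / t^2"
    by (rule Chebyshev_inequality) (use i2 assms in auto)
  also have "\<dots> = S / t^2" unfolding e1 using e2 by simp
  finally show ?thesis .
qed

end


lemma H_carrier: "hankel_mat L N x \<in> carrier_mat L (N - L + 1)"
  unfolding hankel_mat_def by (rule mat_carrier)

lemma B_carrier: "hankel_mat L N x * transpose_mat (hankel_mat L N x) \<in> carrier_mat L L"
  by (rule mult_carrier_mat[OF H_carrier]) (subst transpose_carrier_mat, rule H_carrier)

lemma mat_gram_index: assumes "i < L" "k < L"
  shows "(mat L S f * transpose_mat (mat L S f)) $$ (i,k) = (\<Sum>j<S. f (i,j) * f (k,j))"
proof -
  have "(mat L S f * transpose_mat (mat L S f)) $$ (i,k) = row (mat L S f) i \<bullet> col (transpose_mat (mat L S f)) k"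
    using assms by simp
  also have "\<dots> = (\<Sum>j\<in>{0..<S}. row (mat L S f) i $ j * col (transpose_mat (mat L S f)) k $ j)"
    unfolding scalar_prod_def by simp
  also have "\<dots> = (\<Sum>j\<in>{0..<S}. f (i,j) * f (k,j))"
    using assms by (intro sum.cong refl) simp
  finally show ?thesis by (simp add: atLeast0LessThan)
qed

lemma B_index: assumes "i < L" "k < L"
  shows "(hankel_mat L N x * transpose_mat (hankel_mat L N x)) $$ (i,k) = aa (N - L + 1) x i k"
  unfolding hankel_mat_def aa_def by (subst mat_gram_index[OF assms]) simp


lemma eig_char:
  assumes "eigenvalue (hankel_mat L N x * transpose_mat (hankel_mat L N x)) e"
  shows "\<exists>v::nat \<Rightarrow> real. (\<exists>i<L. v i \<noteq> 0) \<and> (\<forall>i<L. (\<Sum>k<L. aa (N - L + 1) x i k * v k) = e * v i)"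
proof -
  let ?B = "hankel_mat L N x * transpose_mat (hankel_mat L N x)"
  from assms obtain v where v: "v \<in> carrier_vec L" "v \<noteq> 0\<^sub>v L" "?B *\<^sub>v v = e \<cdot>\<^sub>v v"
    unfolding eigenvalue_def eigenvector_def using B_carrier[of L N x] by auto
  have "\<exists>i<L. v $ i \<noteq> 0"
  proof (rule ccontr)
    assume "\<not> ?thesis"
    then have "v = 0\<^sub>v L" using v(1) by (intro eq_vecI) auto
    with v(2) show False by simp
  qed
  moreover have "\<forall>i<L. (\<Sum>k<L. aa (N - L + 1) x i k * v $ k) = e * v $ i"
  proof (intro allI impI)
    fix i assume i: "i < L"
    have "(?B *\<^sub>v v) $ i = e * v $ i" using v(1,3) i by simp
    moreover have "(?B *\<^sub>v v) $ i = (\<Sum>k<L. aa (N - L + 1) x i k * v $ k)"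
    proof -
      have "(?B *\<^sub>v v) $ i = (\<Sum>k\<in>{0..<L}. ?B $$ (i,k) * v $ k)"
        using i v(1) B_carrier[of L N x] by (auto simp: scalar_prod_def intro!: sum.cong)
      also have "\<dots> = (\<Sum>k<L. aa (N - L + 1) x i k * v $ k)"
        unfolding atLeast0LessThan using i by (intro sum.cong refl) (auto simp: B_index)
      finally show ?thesis .
    qed
    ultimately show "(\<Sum>k<L. aa (N - L + 1) x i k * v $ k) = e * v $ i" by simp
  qed
  ultimately show ?thesis by (intro exI[of _ "\<lambda>k. v $ k"]) auto
qed

lemma eig_nonneg:
  assumes "eigenvalue (hankel_mat L N x * transpose_mat (hankel_mat L N x)) e"
  shows "e \<ge> 0"
proof -
  let ?S = "N - L + 1"
  let ?a' = "aa ?S x"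
  obtain v where v: "\<exists>i<L. v i \<noteq> 0" "\<forall>i<L. (\<Sum>k<L. aa ?S x i k * v k) = e * v i"
    using eig_char[OF assms] by blast
  have pos: "(\<Sum>i<L. v i * v i) > 0"
  proof -
    obtain i where "i < L" "v i \<noteq> 0" using v(1) by blast
    then have "0 < v i * v i" by (metis not_real_square_gt_zero)
    also have "v i * v i \<le> (\<Sum>i<L. v i * v i)"
      using \<open>i < L\<close> by (intro member_le_sum) auto
    finally show ?thesis .
  qed
  have "e * (\<Sum>i<L. v i * v i) = (\<Sum>i<L. v i * (e * v i))"
    by (simp add: sum_distrib_left algebra_simps)
  also have "\<dots> = (\<Sum>i<L. v i * (\<Sum>k<L. aa ?S x i k * v k))"
    using v(2) by simp
  also have "\<dots> = (\<Sum>j<?S. (\<Sum>i<L. v i * x (i+j)) * (\<Sum>k<L. v k * x (k+j)))"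
  proof -
    have "(\<Sum>i<L. v i * (\<Sum>k<L. ?a' i k * v k)) = (\<Sum>i<L. \<Sum>k<L. \<Sum>j<?S. v i * x (i+j) * (v k * x (k+j)))"
      unfolding aa_def by (simp add: sum_distrib_left sum_distrib_right mult_ac del: sum.lessThan_Suc)
    also have "\<dots> = (\<Sum>i<L. \<Sum>j<?S. \<Sum>k<L. v i * x (i+j) * (v k * x (k+j)))"
      by (rule sum.cong[OF refl], rule sum.swap)
    also have "\<dots> = (\<Sum>j<?S. \<Sum>i<L. \<Sum>k<L. v i * x (i+j) * (v k * x (k+j)))"
      by (rule sum.swap)
    also have "\<dots> = (\<Sum>j<?S. (\<Sum>i<L. v i * x (i+j)) * (\<Sum>k<L. v k * x (k+j)))"
      by (simp add: sum_product)
    finally show ?thesis by simp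
  qed
  also have "\<dots> \<ge> 0" by (intro sum_nonneg) simp
  finally show ?thesis using pos by (simp add: zero_le_mult_iff)
qed

lemma eig_gersh:
  assumes "eigenvalue (hankel_mat L N x * transpose_mat (hankel_mat L N x)) e"
  shows "\<exists>i<L. aa (N - L + 1) x i i - (\<Sum>k\<in>{..<L} - {i}. \<bar>aa (N - L + 1) x i k\<bar>) \<le> e"
proof -
  let ?S = "N - L + 1"
  let ?a = "aa ?S x"
  obtain v where v: "\<exists>i<L. v i \<noteq> 0" "\<forall>i<L. (\<Sum>k<L. ?a i k * v k) = e * v i"
    using eig_char[OF assms] by blast
  have L: "{..<L} \<noteq> {}" using v(1) by auto
  define m where "m = Max ((\<lambda>k. \<bar>v k\<bar>) ` {..<L})"
  have "m \<in> (\<lambda>k. \<bar>v k\<bar>) ` {..<L}" unfolding m_def using L by (intro Max_in) auto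
  then obtain i where i: "i < L" "\<bar>v i\<bar> = m" by auto
  have mx: "\<bar>v k\<bar> \<le> \<bar>v i\<bar>" if "k < L" for k
  proof -
    have "\<bar>v k\<bar> \<le> m" unfolding m_def by (rule Max_ge) (use that in auto)
    then show ?thesis using i(2) by simp
  qed
  have vi: "\<bar>v i\<bar> > 0"
  proof -
    obtain k where "k < L" "v k \<noteq> 0" using v(1) by blast
    then show ?thesis using mx[of k] by simp
  qed
  have split: "(\<Sum>k<L. ?a i k * v k) = ?a i i * v i + (\<Sum>k\<in>{..<L} - {i}. ?a i k * v k)"
    using i(1) by (simp add: sum.remove)
  have "(e - ?a i i) * v i = (\<Sum>k\<in>{..<L} - {i}. ?a i k * v k)"
    using v(2) i(1) split by (simp add: algebra_simps)
  then have "\<bar>e - ?a i i\<bar> * \<bar>v i\<bar> = \<bar>\<Sum>k\<in>{..<L} - {i}. ?a i k * v k\<bar>"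
    by (metis abs_mult)
  also have "\<dots> \<le> (\<Sum>k\<in>{..<L} - {i}. \<bar>?a i k\<bar> * \<bar>v k\<bar>)"
    by (rule order_trans[OF sum_abs]) (simp add: abs_mult)
  also have "\<dots> \<le> (\<Sum>k\<in>{..<L} - {i}. \<bar>?a i k\<bar> * \<bar>v i\<bar>)"
    by (intro sum_mono mult_left_mono mx) auto
  also have "\<dots> = (\<Sum>k\<in>{..<L} - {i}. \<bar>?a i k\<bar>) * \<bar>v i\<bar>"
    by (simp add: sum_distrib_right)
  finally have X: "\<bar>e - ?a i i\<bar> * \<bar>v i\<bar> \<le> (\<Sum>k\<in>{..<L} - {i}. \<bar>?a i k\<bar>) * \<bar>v i\<bar>" .
  have Y: "\<bar>e - ?a i i\<bar> \<le> (\<Sum>k\<in>{..<L} - {i}. \<bar>?a i k\<bar>)"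
    by (rule mult_right_le_imp_le[OF X vi])
  from Y have "?a i i - (\<Sum>k\<in>{..<L} - {i}. \<bar>?a i k\<bar>) \<le> e" unfolding abs_le_iff by linarith
  then show ?thesis using i(1) by blast
qed


lemma poly_prod_linear_zero: "x \<in> set as \<Longrightarrow> poly (\<Prod>a\<leftarrow>as. [:- a, 1:]) x = 0"
  for x :: "'a::idom"
  by (induction as) auto

lemma real_sym_eigenvalue_exists:
  fixes A :: "real mat"
  assumes A: "A \<in> carrier_mat n n" and n: "n \<ge> 1"
    and sym: "\<And>i k. i < n \<Longrightarrow> k < n \<Longrightarrow> A $$ (i,k) = A $$ (k,i)"
  shows "\<exists>e. eigenvalue A e"
proof -
  define Ac where "Ac = map_mat complex_of_real A"
  have Ac: "Ac \<in> carrier_mat n n" using A unfolding Ac_def by simp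
  obtain as where as: "char_poly Ac = (\<Prod>a\<leftarrow>as. [:- a, 1:])" "length as = n"
    using char_poly_factorized[OF Ac] by blast
  define l where "l = as ! 0"
  have "l \<in> set as" using as(2) n unfolding l_def by simp
  then have "poly (char_poly Ac) l = 0" using as(1) poly_prod_linear_zero by metis
  then have "eigenvalue Ac l" using eigenvalue_root_char_poly[OF Ac] by simp
  then obtain v where v: "v \<in> carrier_vec n" "v \<noteq> 0\<^sub>v n" "Ac *\<^sub>v v = l \<cdot>\<^sub>v v"
    unfolding eigenvalue_def eigenvector_def using Ac by auto
  define a where "a i k = A $$ (i,k)" for i k
  have ev: "(\<Sum>k<n. of_real (a i k) * v $ k) = l * v $ i" if i: "i < n" for i
  proof -
    have "(Ac *\<^sub>v v) $ i = l * v $ i" using v(1,3) i by simp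
    moreover have "(Ac *\<^sub>v v) $ i = (\<Sum>k<n. of_real (a i k) * v $ k)"
      using i v(1) A unfolding Ac_def a_def
      by (auto simp: scalar_prod_def atLeast0LessThan intro!: sum.cong)
    ultimately show ?thesis by simp
  qed
  define s where "s = (\<Sum>i<n. cnj (v $ i) * (\<Sum>k<n. of_real (a i k) * v $ k))"
  define r where "r = (\<Sum>i<n. (cmod (v $ i))^2)"
  have s1: "s = l * of_real r"
  proof -
    have "s = (\<Sum>i<n. l * (cnj (v $ i) * v $ i))"
      unfolding s_def by (intro sum.cong refl) (simp add: ev)
    also have "\<dots> = l * of_real r"
      unfolding r_def by (simp add: sum_distrib_left complex_norm_square[symmetric] mult.commute)
    finally show ?thesis .
  qed
  have s2: "cnj s = s"
  proof -
    have "cnj s = (\<Sum>i<n. \<Sum>k<n. of_real (a i k) * (v $ i * cnj (v $ k)))"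
      unfolding s_def by (simp add: sum_distrib_left mult_ac)
    also have "\<dots> = (\<Sum>k<n. \<Sum>i<n. of_real (a i k) * (v $ i * cnj (v $ k)))"
      by (rule sum.swap)
    also have "\<dots> = (\<Sum>k<n. \<Sum>i<n. of_real (a k i) * (cnj (v $ k) * v $ i))"
      by (intro sum.cong refl) (simp add: a_def sym mult_ac)
    also have "\<dots> = s"
      unfolding s_def by (simp add: sum_distrib_left mult_ac)
    finally show ?thesis .
  qed
  have rpos: "r > 0"
  proof -
    obtain i where i: "i < n" "v $ i \<noteq> 0"
    proof -
      have "\<exists>i<n. v $ i \<noteq> 0"
      proof (rule ccontr)
        assume "\<not> ?thesis"
        then have "v = 0\<^sub>v n" using v(1) by (intro eq_vecI) auto
        with v(2) show False by simp
      qed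
      then show ?thesis using that by blast
    qed
    have "0 < (cmod (v $ i))^2" using i by simp
    also have "\<dots> \<le> r" unfolding r_def using i by (intro member_le_sum) auto
    finally show ?thesis .
  qed
  have "Im s = 0" using s2 by (metis cnj.sel(2) complex_cnj_cancel_iff equation_minus_iff minus_equation_iff Im_complex_of_real complex_eq_iff Reals_cnj_iff Reals_def complex_is_Real_iff)
  then have "Im l * r = 0" using s1 by simp
  then have Iml: "Im l = 0" using rpos by simp
  then have "l = of_real (Re l)" by (simp add: complex_eq_iff)
  have "of_real (poly (char_poly A) (Re l)) = poly (char_poly Ac) l"
    unfolding Ac_def of_real_hom.char_poly_hom[OF A] using \<open>l = of_real (Re l)\<close>
    by (metis of_real_hom.poly_map_poly)
  then have "poly (char_poly A) (Re l) = 0" using \<open>poly (char_poly Ac) l = 0\<close> by simp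
  then show ?thesis using eigenvalue_root_char_poly[OF A] by blast
qed

lemma finite_eigenvalues:
  fixes A :: "real mat"
  assumes A: "A \<in> carrier_mat n n"
  shows "finite {e. eigenvalue A e}"
proof -
  have "char_poly A \<noteq> 0" using degree_monic_char_poly[OF A] by auto
  then have "finite {e. poly (char_poly A) e = 0}" by (rule poly_roots_finite)
  then show ?thesis using eigenvalue_root_char_poly[OF A] by simp
qed


lemma root_rat_char:
  fixes f :: "real \<Rightarrow> real"
  assumes cont: "continuous_on UNIV f"
  shows "(\<exists>e\<in>{0..<c}. f e = 0) \<longleftrightarrow>
    (\<exists>n::nat. \<forall>m::nat. \<exists>q::rat. 0 \<le> real_of_rat q \<and> real_of_rat q \<le> c - 1 / Suc n \<and> \<bar>f (real_of_rat q)\<bar> < 1 / Suc m)"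
proof
  assume "\<exists>e\<in>{0..<c}. f e = 0"
  then obtain e where e: "0 \<le> e" "e < c" "f e = 0" by auto
  obtain n where n: "1 / real (Suc n) < c - e"
    using reals_Archimedean[of "c - e"] e(2) by (auto simp: inverse_eq_divide)
  have "\<forall>m::nat. \<exists>q::rat. 0 \<le> real_of_rat q \<and> real_of_rat q \<le> c - 1 / Suc n \<and> \<bar>f (real_of_rat q)\<bar> < 1 / Suc m"
  proof
    fix m :: nat
    have "isCont f e" using cont by (simp add: continuous_on_eq_continuous_at)
    moreover have "(1::real) / Suc m > 0" by simp
    ultimately obtain d where d: "d > 0" "\<And>y. dist y e < d \<Longrightarrow> dist (f y) (f e) < 1 / Suc m"
      unfolding continuous_at_eps_delta by blast
    have "e < min (e + d) (c - 1 / Suc n)" using d(1) n by auto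
    then obtain r where r: "r \<in> \<rat>" "e < r" "r < min (e + d) (c - 1 / Suc n)"
      using Rats_dense_in_real by blast
    then obtain q where q: "r = real_of_rat q" by (auto elim: Rats_cases)
    have "dist r e < d" using r by (simp add: dist_real_def)
    then have "\<bar>f r\<bar> < 1 / Suc m" using d(2)[of r] e(3) by (simp add: dist_real_def)
    then show "\<exists>q::rat. 0 \<le> real_of_rat q \<and> real_of_rat q \<le> c - 1 / Suc n \<and> \<bar>f (real_of_rat q)\<bar> < 1 / Suc m"
    proof (intro exI[of _ q] conjI)
      show "0 \<le> real_of_rat q" using r e(1) q by linarith
      show "real_of_rat q \<le> c - 1 / Suc n" using r q by linarith
      show "\<bar>f (real_of_rat q)\<bar> < 1 / Suc m" using \<open>\<bar>f r\<bar> < 1 / Suc m\<close> q by simp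
    qed
  qed
  then show "\<exists>n::nat. \<forall>m::nat. \<exists>q::rat. 0 \<le> real_of_rat q \<and> real_of_rat q \<le> c - 1 / Suc n \<and> \<bar>f (real_of_rat q)\<bar> < 1 / Suc m"
    by blast
next
  assume "\<exists>n::nat. \<forall>m::nat. \<exists>q::rat. 0 \<le> real_of_rat q \<and> real_of_rat q \<le> c - 1 / Suc n \<and> \<bar>f (real_of_rat q)\<bar> < 1 / Suc m"
  then obtain n where n: "\<And>m::nat. \<exists>q::rat. 0 \<le> real_of_rat q \<and> real_of_rat q \<le> c - 1 / Suc n \<and> \<bar>f (real_of_rat q)\<bar> < 1 / Suc m"
    by blast
  define d where "d = c - 1 / Suc n"
  have ne: "{0..d} \<noteq> {}"
  proof -
    obtain q :: rat where "0 \<le> real_of_rat q" "real_of_rat q \<le> c - 1 / Suc n" using n[of 0] by blast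
    then have "0 \<le> d" unfolding d_def by linarith
    then show ?thesis by simp
  qed
  have "continuous_on {0..d} (\<lambda>x. \<bar>f x\<bar>)"
    by (intro continuous_intros continuous_on_subset[OF cont]) auto
  then obtain e where e: "e \<in> {0..d}" "\<And>y. y \<in> {0..d} \<Longrightarrow> \<bar>f e\<bar> \<le> \<bar>f y\<bar>"
    using continuous_attains_inf[OF compact_Icc ne] by blast
  have "f e = 0"
  proof (rule ccontr)
    assume "f e \<noteq> 0"
    then have "\<bar>f e\<bar> > 0" by simp
    then obtain m where m: "1 / real (Suc m) < \<bar>f e\<bar>"
      using reals_Archimedean[of "\<bar>f e\<bar>"] by (auto simp: inverse_eq_divide)
    obtain q :: rat where q: "0 \<le> real_of_rat q" "real_of_rat q \<le> d" "\<bar>f (real_of_rat q)\<bar> < 1 / Suc m"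
      using n[of m] unfolding d_def by blast
    have "\<bar>f e\<bar> \<le> \<bar>f (real_of_rat q)\<bar>" using q by (intro e(2)) auto
    with q(3) m show False by linarith
  qed
  moreover have "e \<in> {0..<c}"
  proof -
    have "(1::real) / Suc n > 0" by simp
    moreover have "0 \<le> e" "e \<le> c - 1 / Suc n" using e(1) unfolding d_def by auto
    ultimately have "e < c" by linarith
    then show ?thesis using \<open>0 \<le> e\<close> by simp
  qed
  ultimately show "\<exists>e\<in>{0..<c}. f e = 0" by blast
qed

lemma char_poly_det_formula:
  fixes A :: "real mat"
  assumes A: "A \<in> carrier_mat n n"
  shows "poly (char_poly A) k = (\<Sum>p\<in>{p. p permutes {0..<n}}. signof p * (\<Prod>i=0..<n. (if i = p i then k else 0) - A $$ (i, p i)))"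
proof -
  have "poly (char_poly A) k = det (- char_matrix A k)" by (rule char_poly_matrix[OF A])
  also have "\<dots> = (\<Sum>p\<in>{p. p permutes {0..<n}}. signof p * (\<Prod>i=0..<n. (- char_matrix A k) $$ (i, p i)))"
    unfolding det_def using A by (simp add: char_matrix_def)
  also have "\<dots> = (\<Sum>p\<in>{p. p permutes {0..<n}}. signof p * (\<Prod>i=0..<n. (if i = p i then k else 0) - A $$ (i, p i)))"
  proof (intro sum.cong refl arg_cong2[where f = "(*)"] prod.cong)
    fix p i assume p: "p \<in> {p. p permutes {0..<n}}" and i: "i \<in> {0..<n}"
    have pi: "p i < n" using permutes_in_image[of p "{0..<n}" i] p i by auto
    show "(- char_matrix A k) $$ (i, p i) = (if i = p i then k else 0) - A $$ (i, p i)"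
      using A i pi unfolding char_matrix_def by auto
  qed
  finally show ?thesis .
qed


lemma aa_sym: "aa S x i k = aa S x k i"
  unfolding aa_def by (simp add: mult.commute)

lemma event_char:
  fixes x :: "nat \<Rightarrow> real"
  assumes L: "L \<ge> 1" and eps: "\<epsilon> > 0"
  shows "(sigma_min (hankel_mat L N x) \<noteq> 0 \<and> 1 / sigma_min (hankel_mat L N x) \<le> \<epsilon>) \<longleftrightarrow>
    \<not> (\<exists>e\<in>{0..<1/\<epsilon>^2}. poly (char_poly (hankel_mat L N x * transpose_mat (hankel_mat L N x))) e = 0)"
proof -
  let ?B = "hankel_mat L N x * transpose_mat (hankel_mat L N x)"
  define EV where "EV = {e. eigenvalue ?B e}"
  have fin: "finite EV" unfolding EV_def by (rule finite_eigenvalues[OF B_carrier])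
  have ne: "EV \<noteq> {}"
  proof -
    have "\<exists>e. eigenvalue ?B e"
      by (rule real_sym_eigenvalue_exists[OF B_carrier L])
        (simp add: B_index aa_sym[of _ x])
    then show ?thesis unfolding EV_def by auto
  qed
  define m where "m = Min EV"
  have m_in: "m \<in> EV" unfolding m_def using fin ne by (rule Min_in)
  have m0: "m \<ge> 0" using m_in eig_nonneg unfolding EV_def by blast
  have sm: "sigma_min (hankel_mat L N x) = sqrt m" unfolding sigma_min_def m_def EV_def by simp
  have step1: "(sqrt m \<noteq> 0 \<and> 1 / sqrt m \<le> \<epsilon>) \<longleftrightarrow> 1 / \<epsilon>^2 \<le> m"
  proof
    assume a: "sqrt m \<noteq> 0 \<and> 1 / sqrt m \<le> \<epsilon>"
    then have sp: "sqrt m > 0" using m0 by simp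
    then have "1 \<le> \<epsilon> * sqrt m" using a by (simp add: field_simps)
    then have "1 \<le> (\<epsilon> * sqrt m)^2" by (simp add: one_le_power)
    also have "\<dots> = \<epsilon>^2 * m" using m0 by (simp add: power_mult_distrib)
    finally show "1 / \<epsilon>^2 \<le> m" using eps by (simp add: field_simps)
  next
    assume a: "1 / \<epsilon>^2 \<le> m"
    then have "1 \<le> \<epsilon>^2 * m" using eps by (simp add: field_simps)
    also have "\<epsilon>^2 * m = (\<epsilon> * sqrt m)^2" using m0 by (simp add: power_mult_distrib)
    finally have X: "1\<^sup>2 \<le> (\<epsilon> * sqrt m)^2" by simp
    have "\<bar>1\<bar> \<le> \<bar>\<epsilon> * sqrt m\<bar>" using abs_le_square_iff[of 1 "\<epsilon> * sqrt m"] X by blast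
    moreover have "\<epsilon> * sqrt m \<ge> 0" using eps m0 by simp
    ultimately have "1 \<le> \<epsilon> * sqrt m" by simp
    have "sqrt m \<noteq> 0"
    proof
      assume "sqrt m = 0"
      with \<open>1 \<le> \<epsilon> * sqrt m\<close> show False by simp
    qed
    then have sp: "sqrt m > 0" using m0 by simp
    show "sqrt m \<noteq> 0 \<and> 1 / sqrt m \<le> \<epsilon>"
      using sp \<open>1 \<le> \<epsilon> * sqrt m\<close> by (simp add: field_simps)
  qed
  have step2: "1 / \<epsilon>^2 \<le> m \<longleftrightarrow> (\<forall>e\<in>EV. 1 / \<epsilon>^2 \<le> e)"
    unfolding m_def using fin ne by (rule Min_ge_iff)
  have step3: "(\<forall>e\<in>EV. 1 / \<epsilon>^2 \<le> e) \<longleftrightarrow> \<not> (\<exists>e\<in>{0..<1/\<epsilon>^2}. poly (char_poly ?B) e = 0)"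
  proof
    assume a: "\<forall>e\<in>EV. 1 / \<epsilon>^2 \<le> e"
    show "\<not> (\<exists>e\<in>{0..<1/\<epsilon>^2}. poly (char_poly ?B) e = 0)"
    proof
      assume "\<exists>e\<in>{0..<1/\<epsilon>^2}. poly (char_poly ?B) e = 0"
      then obtain e where e: "e < 1/\<epsilon>^2" "poly (char_poly ?B) e = 0" by auto
      then have "e \<in> EV" unfolding EV_def using eigenvalue_root_char_poly[OF B_carrier] by blast
      with a e(1) show False by fastforce
    qed
  next
    assume a: "\<not> (\<exists>e\<in>{0..<1/\<epsilon>^2}. poly (char_poly ?B) e = 0)"
    show "\<forall>e\<in>EV. 1 / \<epsilon>^2 \<le> e"
    proof
      fix e assume e: "e \<in> EV"
      then have "e \<ge> 0" unfolding EV_def using eig_nonneg by blast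
      moreover have "poly (char_poly ?B) e = 0" using e unfolding EV_def using eigenvalue_root_char_poly[OF B_carrier] by blast
      ultimately show "1 / \<epsilon>^2 \<le> e" using a by (meson atLeastLessThan_iff not_le)
    qed
  qed
  show ?thesis unfolding sm using step1 step2 step3 by simp
qed


context gauss begin

lemma poly_meas:
  "(\<lambda>\<omega>. poly (char_poly (hankel_mat L N (\<lambda>k. z k \<omega>) * transpose_mat (hankel_mat L N (\<lambda>k. z k \<omega>)))) q) \<in> borel_measurable M"
proof -
  have eq: "poly (char_poly (hankel_mat L N (\<lambda>k. z k \<omega>) * transpose_mat (hankel_mat L N (\<lambda>k. z k \<omega>)))) q =
    (\<Sum>p\<in>{p. p permutes {0..<L}}. signof p * (\<Prod>i=0..<L. (if i = p i then q else 0) - aa (N - L + 1) (\<lambda>k. z k \<omega>) i (p i)))" for \<omega>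
    unfolding char_poly_det_formula[OF B_carrier]
  proof (intro sum.cong refl arg_cong2[where f = "(*)"] prod.cong)
    fix p i assume p: "p \<in> {p. p permutes {0..<L}}" and i: "i \<in> {0..<L}"
    have pi: "p i < L" using permutes_in_image[of p "{0..<L}" i] p i by auto
    show "(if i = p i then q else 0) - (hankel_mat L N (\<lambda>k. z k \<omega>) * transpose_mat (hankel_mat L N (\<lambda>k. z k \<omega>))) $$ (i, p i) =
        (if i = p i then q else 0) - aa (N - L + 1) (\<lambda>k. z k \<omega>) i (p i)"
      using i pi by (simp add: B_index)
  qed
  show ?thesis unfolding eq by measurable
qed

lemma event_sets:
  assumes L: "L \<ge> 1" and eps: "\<epsilon> > 0"
  shows "{\<omega> \<in> space M. sigma_min (hankel_mat L N (\<lambda>k. z k \<omega>)) \<noteq> 0 \<and>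
        1 / sigma_min (hankel_mat L N (\<lambda>k. z k \<omega>)) \<le> \<epsilon>} \<in> sets M"
proof -
  let ?P = "\<lambda>\<omega> q. poly (char_poly (hankel_mat L N (\<lambda>k. z k \<omega>) * transpose_mat (hankel_mat L N (\<lambda>k. z k \<omega>)))) q"
  have cont: "continuous_on UNIV (?P \<omega>)" for \<omega> by (intro continuous_intros)
  have "{\<omega> \<in> space M. sigma_min (hankel_mat L N (\<lambda>k. z k \<omega>)) \<noteq> 0 \<and>
        1 / sigma_min (hankel_mat L N (\<lambda>k. z k \<omega>)) \<le> \<epsilon>} =
    {\<omega> \<in> space M. \<not> (\<exists>n::nat. \<forall>m::nat. \<exists>q::rat. 0 \<le> real_of_rat q \<and> real_of_rat q \<le> 1/\<epsilon>^2 - 1 / Suc n \<and> \<bar>?P \<omega> (real_of_rat q)\<bar> < 1 / Suc m)}"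
  proof (rule Collect_cong)
    fix \<omega>
    show "(\<omega> \<in> space M \<and> sigma_min (hankel_mat L N (\<lambda>k. z k \<omega>)) \<noteq> 0 \<and>
        1 / sigma_min (hankel_mat L N (\<lambda>k. z k \<omega>)) \<le> \<epsilon>) =
      (\<omega> \<in> space M \<and> \<not> (\<exists>n::nat. \<forall>m::nat. \<exists>q::rat. 0 \<le> real_of_rat q \<and> real_of_rat q \<le> 1/\<epsilon>^2 - 1 / Suc n \<and> \<bar>?P \<omega> (real_of_rat q)\<bar> < 1 / Suc m))"
      unfolding event_char[OF L eps, of N "\<lambda>k. z k \<omega>"] root_rat_char[OF cont[of \<omega>], of "1/\<epsilon>^2"] by (rule refl)
  qed
  also have "\<dots> \<in> sets M"
    using poly_meas[measurable] by measurable
  finally show ?thesis .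
qed

end


context gauss begin

definition Ev :: "nat \<Rightarrow> nat \<Rightarrow> real \<Rightarrow> 'a set" where
  "Ev L N \<epsilon> = {\<omega> \<in> space M. sigma_min (hankel_mat L N (\<lambda>k. z k \<omega>)) \<noteq> 0 \<and>
        1 / sigma_min (hankel_mat L N (\<lambda>k. z k \<omega>)) \<le> \<epsilon>}"

lemma prob_bound:
  fixes N S :: nat
  assumes L: "L \<ge> 1"
  defines "S \<equiv> N - L + 1"
  shows "prob (Ev L N (2 / sqrt S)) \<ge> 1 - (8 * real L + 16 * real L ^ 4) / S"
proof -
  let ?a = "\<lambda>\<omega>. aa S (\<lambda>k. z k \<omega>)"
  have S0: "S > 0" unfolding S_def by simp
  have Lr: "real L \<ge> 1" using L by simp
  define G where "G = {\<omega> \<in> space M. (\<forall>i<L. S/2 \<le> ?a \<omega> i i) \<and> (\<forall>i<L. \<forall>k<L. i \<noteq> k \<longrightarrow> \<bar>?a \<omega> i k\<bar> < S / (4 * L))}"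
  have Gs: "G \<in> sets M" unfolding G_def by measurable
  have eps: "2 / sqrt S > 0" using S0 by simp
  have c: "1 / (2 / sqrt S)^2 = S / 4" using S0 by (simp add: power_divide)
  have Es: "Ev L N (2 / sqrt S) \<in> sets M" unfolding Ev_def by (rule event_sets[OF L eps])
  have GE: "G \<subseteq> Ev L N (2 / sqrt S)"
  proof
    fix \<omega> assume g: "\<omega> \<in> G"
    have "\<not> (\<exists>e\<in>{0..<1/(2 / sqrt S)^2}. poly (char_poly (hankel_mat L N (\<lambda>k. z k \<omega>) * transpose_mat (hankel_mat L N (\<lambda>k. z k \<omega>)))) e = 0)"
    proof
      assume "\<exists>e\<in>{0..<1/(2 / sqrt S)^2}. poly (char_poly (hankel_mat L N (\<lambda>k. z k \<omega>) * transpose_mat (hankel_mat L N (\<lambda>k. z k \<omega>)))) e = 0"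
      then obtain e where e: "e < S / 4" "poly (char_poly (hankel_mat L N (\<lambda>k. z k \<omega>) * transpose_mat (hankel_mat L N (\<lambda>k. z k \<omega>)))) e = 0"
        unfolding c by auto
      then have "eigenvalue (hankel_mat L N (\<lambda>k. z k \<omega>) * transpose_mat (hankel_mat L N (\<lambda>k. z k \<omega>))) e"
        using eigenvalue_root_char_poly[OF B_carrier] by blast
      from eig_gersh[OF this] obtain i where i: "i < L"
        "?a \<omega> i i - (\<Sum>k\<in>{..<L} - {i}. \<bar>?a \<omega> i k\<bar>) \<le> e" unfolding S_def by blast
      have "(\<Sum>k\<in>{..<L} - {i}. \<bar>?a \<omega> i k\<bar>) \<le> of_nat (card ({..<L} - {i})) * (S / (4 * L))"
        using g i(1) unfolding G_def by (intro sum_bounded_above) (auto intro: less_imp_le)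
      also have "of_nat (card ({..<L} - {i})) = real L - 1" using i(1) L by (simp add: of_nat_diff)
      also have "(real L - 1) * (S / (4 * L)) \<le> S / 4"
        using Lr S0 by (simp add: field_simps)
      finally have "(\<Sum>k\<in>{..<L} - {i}. \<bar>?a \<omega> i k\<bar>) \<le> S / 4" .
      moreover have "S / 2 \<le> ?a \<omega> i i" using g i(1) unfolding G_def by auto
      ultimately show False using i(2) e(1) by linarith
    qed
    moreover have "\<omega> \<in> space M" using g unfolding G_def by auto
    ultimately show "\<omega> \<in> Ev L N (2 / sqrt S)"
      unfolding Ev_def using event_char[OF L eps, of N "\<lambda>k. z k \<omega>"] by simp
  qed
  define D where "D i = {\<omega> \<in> space M. ?a \<omega> i i < S/2}" for i
  define Off where "Off i k = {\<omega> \<in> space M. S / (4 * L) \<le> \<bar>?a \<omega> i k\<bar>}" for i k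
  have Ds: "D i \<in> sets M" for i unfolding D_def by measurable
  have Offs: "Off i k \<in> sets M" for i k unfolding Off_def by measurable
  have sub: "space M - G \<subseteq> (\<Union>i\<in>{..<L}. D i) \<union> (\<Union>i\<in>{..<L}. \<Union>k\<in>{..<L} - {i}. Off i k)"
    unfolding G_def D_def Off_def by (auto simp: not_less)
  have pD: "prob (D i) \<le> 8 / S" for i unfolding D_def by (rule diag_bound[OF S0])
  have pOff: "prob (Off i k) \<le> 16 * real L ^ 2 / S" if "i \<noteq> k" for i k
  proof -
    have "prob (Off i k) \<le> S / (S / (4 * L))^2" unfolding Off_def
      by (rule off_bound[OF S0 that]) (use S0 Lr in simp)
    also have "\<dots> = 16 * real L ^ 2 / S" using S0 Lr by (simp add: power2_eq_square field_simps)
    finally show ?thesis .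
  qed
  have "prob (space M - G) \<le> prob ((\<Union>i\<in>{..<L}. D i) \<union> (\<Union>i\<in>{..<L}. \<Union>k\<in>{..<L} - {i}. Off i k))"
    using sub Ds Offs by (intro finite_measure_mono) auto
  also have "\<dots> \<le> prob (\<Union>i\<in>{..<L}. D i) + prob (\<Union>i\<in>{..<L}. \<Union>k\<in>{..<L} - {i}. Off i k)"
    using Ds Offs by (intro measure_Un_le) auto
  also have "prob (\<Union>i\<in>{..<L}. D i) \<le> (\<Sum>i<L. prob (D i))"
    using Ds by (intro measure_UNION_le) auto
  also have "\<dots> \<le> (\<Sum>i<L. 8 / S)" by (intro sum_mono pD)
  also have "prob (\<Union>i\<in>{..<L}. \<Union>k\<in>{..<L} - {i}. Off i k) \<le> (\<Sum>i<L. prob (\<Union>k\<in>{..<L} - {i}. Off i k))"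
    using Offs by (intro measure_UNION_le) auto
  also have "\<dots> \<le> (\<Sum>i<L. \<Sum>k\<in>{..<L} - {i}. prob (Off i k))"
    using Offs by (intro sum_mono measure_UNION_le) auto
  also have "\<dots> \<le> (\<Sum>i<L. \<Sum>k\<in>{..<L} - {i}. 16 * real L ^ 2 / S)"
    by (intro sum_mono pOff) auto
  also have "\<dots> \<le> (\<Sum>i<L. \<Sum>k<L. 16 * real L ^ 2 / S)"
    by (intro sum_mono sum_mono2) auto
  finally have "prob (space M - G) \<le> 8 * L / S + 16 * real L ^ 4 / S"
    by (simp add: power_def mult_ac)
  then have "prob G \<ge> 1 - (8 * L + 16 * real L ^ 4) / S"
    using prob_compl[OF Gs] by (simp add: add_divide_distrib)
  also have "prob G \<le> prob (Ev L N (2 / sqrt S))"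
    using GE Es by (intro finite_measure_mono)
  finally show ?thesis by simp
qed

end


lemma nat_shift_tendsto:
  fixes g :: "real \<Rightarrow> real"
  assumes "((\<lambda>N. g (real N - real L + 1)) \<longlongrightarrow> l) sequentially"
  shows "((\<lambda>N. g (real (N - L + 1))) \<longlongrightarrow> l) sequentially"
proof (rule Lim_transform_eventually[OF assms])
  show "\<forall>\<^sub>F N in sequentially. g (real N - real L + 1) = g (real (N - L + 1))"
    using eventually_ge_at_top[of L] by eventually_elim (simp add: of_nat_diff add.commute)
qed

theorem theorem4:
  fixes M :: "'a measure" and z :: "nat \<Rightarrow> 'a \<Rightarrow> real" and L :: nat
  assumes "prob_space M"
    and "prob_space.indep_vars M (\<lambda>_. borel) z UNIV"
    and "\<And>i. distributed M lborel (z i) std_normal_density"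
    and "L \<ge> 1"
  shows "\<exists>\<epsilon> :: nat \<Rightarrow> real. (\<forall>N. \<epsilon> N > 0) \<and> \<epsilon> \<longlonglongrightarrow> 0 \<and>
    (\<lambda>N. measure M {\<omega> \<in> space M.
        sigma_min (hankel_mat L N (\<lambda>k. z k \<omega>)) \<noteq> 0 \<and>
        1 / sigma_min (hankel_mat L N (\<lambda>k. z k \<omega>)) \<le> \<epsilon> N}) \<longlonglongrightarrow> 1"
proof -
  interpret gauss M z
    by (rule gauss.intro[OF assms(1)], rule gauss_axioms.intro) (use assms in auto)
  define \<epsilon> where "\<epsilon> N = 2 / sqrt (real (N - L + 1))" for N
  define K where "K = 8 * real L + 16 * real L ^ 4"
  have pos: "\<forall>N. \<epsilon> N > 0" unfolding \<epsilon>_def by simp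
  have lim0: "\<epsilon> \<longlonglongrightarrow> 0"
    unfolding \<epsilon>_def by (rule nat_shift_tendsto[where g = "\<lambda>s. 2 / sqrt s"]) real_asymp
  have low: "(\<lambda>N. 1 - K / real (N - L + 1)) \<longlonglongrightarrow> 1"
    by (rule nat_shift_tendsto[where g = "\<lambda>s. 1 - K / s"]) real_asymp
  have "(\<lambda>N. prob (Ev L N (\<epsilon> N))) \<longlonglongrightarrow> 1"
  proof (rule tendsto_sandwich[OF _ _ low tendsto_const])
    show "\<forall>\<^sub>F N in sequentially. 1 - K / real (N - L + 1) \<le> prob (Ev L N (\<epsilon> N))"
      using prob_bound[OF assms(4)] unfolding \<epsilon>_def K_def by simp
    show "\<forall>\<^sub>F N in sequentially. prob (Ev L N (\<epsilon> N)) \<le> 1"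
      by (simp add: prob_le_1)
  qed
  then show ?thesis using pos lim0 unfolding Ev_def by blast
qed


end
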